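(* For every positive integer $n$, \[ \sum_{j=1}^{n}\left(\binom{n}{j}+1\right)\frac{B_j}{j}\left(1-2^{j}\right)=1 . \]
   Context: $B_j$ is the $j$th Bernoulli number ($\frac{t}{e^t-1}=\sum_{m\ge0}B_m\frac{t^m}{m!}$, so $B_1=-1/2$). *)

theory Defs
  imports Complex_Main "HOL-Computational_Algebra.Formal_Power_Series"
begin

text \<open>Bernoulli numbers via the exponential generating function
  t / (e^t - 1) = sum_m B_m t^m / m!  (so B_1 = -1/2).\<close>
definition bernoulli :: "nat \<Rightarrow> real" where
  "bernoulli m = fact m * fps_nth (fps_X / (fps_exp 1 - 1) :: real fps) m"

end

theory Submission
  imports Defs
begin

unbundle fps_syntax

definition scl :: "real \<Rightarrow> real fps \<Rightarrow> real fps" where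
  "scl c f = Abs_fps (\<lambda>n. c ^ n * f $ n)"

lemma scl_mult: "scl c f * scl c g = scl c (f * g)"
proof (rule fps_ext)
  fix n
  have "(scl c f * scl c g) $ n = (\<Sum>i=0..n. c^n * (f $ i * g $ (n - i)))"
    unfolding fps_mult_nth scl_def
    by (intro sum.cong refl) (simp add: power_add[symmetric])
  also have "\<dots> = scl c (f * g) $ n"
    by (simp add: scl_def fps_mult_nth sum_distrib_left)
  finally show "(scl c f * scl c g) $ n = scl c (f * g) $ n" .
qed

lemma scl_diff: "scl c (f - g) = scl c f - scl c g"
  by (rule fps_ext) (simp add: scl_def algebra_simps)

lemma scl_X: "scl c fps_X = fps_const c * fps_X"
proof (rule fps_ext)
  fix n show "scl c fps_X $ n = (fps_const c * fps_X) $ n"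
    by (cases n) (auto simp: scl_def)
qed

lemma scl_exp: "scl c (fps_exp 1) = fps_exp c"
  by (rule fps_ext) (simp add: scl_def)

lemma scl_one: "scl c 1 = 1"
  by (rule fps_ext) (simp add: scl_def)

lemma key:
  fixes n :: nat
  shows "(\<Sum>i\<le>n. real (n choose i) * (bernoulli i * (1 - 2^i))) + bernoulli n * (1 - 2^n)
         = (if n = 1 then 1 else 0)"
proof -
  define E :: "real fps" where "E = fps_exp 1"
  define b where "b = fps_X / (E - 1)"
  have Ene: "E - 1 \<noteq> 0"
  proof
    assume "E - 1 = 0"
    hence "(E - 1) $ 1 = 0" by simp
    thus False by (simp add: E_def)
  qed
  have sd: "subdegree (E - 1) \<le> subdegree (fps_X :: real fps)"
    using subdegree_leI[of "E - 1" 1] by (simp add: E_def)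
  have hb: "b * (E - 1) = fps_X"
    unfolding b_def using fps_times_divide_eq[OF Ene sd] .
  define b2 where "b2 = scl 2 b"
  have E2: "scl 2 E = E * E"
    unfolding E_def scl_exp by (simp add: fps_exp_add_mult[symmetric])
  have hb2: "b2 * (E * E - 1) = fps_const 2 * fps_X"
    using arg_cong[OF hb, of "scl 2"] unfolding b2_def
    by (simp add: scl_mult[symmetric] scl_diff E2 scl_one scl_X)
  have "(b - b2) * (E + 1) * (E - 1) = fps_X * (E - 1)"
  proof -
    have "(b - b2) * (E + 1) * (E - 1) = b * (E - 1) * (E + 1) - b2 * (E * E - 1)"
      by (simp add: algebra_simps)
    also have "\<dots> = fps_X * (E + 1) - fps_const 2 * fps_X" using hb hb2 by simp
    also have "\<dots> = fps_X * (E - 1)"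
      by (simp add: algebra_simps numeral_fps_const[symmetric] fps_const_add[symmetric])
    finally show ?thesis .
  qed
  hence hA: "(b - b2) * (E + 1) = fps_X" using Ene by simp
  have bn: "bernoulli i * (1 - 2^i) = fact i * (b - b2) $ i" for i
    by (simp add: bernoulli_def b_def E_def b2_def scl_def algebra_simps)
  have "((b - b2) * (E + 1)) $ n = (\<Sum>i=0..n. (b - b2) $ i * (1 / fact (n - i))) + (b - b2) $ n"
    proof -
    have "((b - b2) * (E + 1)) $ n = (\<Sum>i=0..n. (b - b2) $ i * (1 / fact (n - i)) + (if i = n then (b - b2) $ i else 0))"
      by (simp add: fps_mult_nth E_def distrib_left sum.distrib)
    also have "\<dots> = (\<Sum>i=0..n. (b - b2) $ i * (1 / fact (n - i))) + (b - b2) $ n"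
      unfolding sum.distrib by simp
    finally show ?thesis .
  qed
  also have "\<dots> = ((\<Sum>i\<le>n. real (n choose i) * (bernoulli i * (1 - 2^i))) + bernoulli n * (1 - 2^n)) / fact n"
    unfolding bn
    apply (simp add: add_divide_distrib sum_divide_distrib atLeast0AtMost)
    apply (intro sum.cong refl)
    apply (simp add: binomial_fact field_simps)
    done
  finally have "((\<Sum>i\<le>n. real (n choose i) * (bernoulli i * (1 - 2^i))) + bernoulli n * (1 - 2^n)) / fact n
     = fps_X $ n" using hA by simp
  thus ?thesis by (simp add: field_simps split: if_splits)
qed


lemma step_lemma:
  fixes n :: nat
  assumes "n \<ge> 1"
  shows "(\<Sum>j=1..Suc n. (real (Suc n choose j) + 1) * (bernoulli j / real j) * (1 - 2 ^ j))
       = (\<Sum>j=1..n. (real (n choose j) + 1) * (bernoulli j / real j) * (1 - 2 ^ j))"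
proof -
  define a where "a i = bernoulli i * (1 - 2^i)" for i :: nat
  define c where "c i = (bernoulli i / real i) * (1 - 2^i)" for i :: nat
  define T where "T m = (\<Sum>j=1..m. (real (m choose j) + 1) * c j)" for m
  have T': "T m = (\<Sum>k<m. (real (m choose Suc k) + 1) * c (Suc k))" for m
    unfolding T_def using sum.atLeast1_atMost_eq[of "\<lambda>j. (real (m choose j) + 1) * c j" m]
    by simp
  have hk: "0 = (\<Sum>k<Suc n. real (Suc n choose Suc k) * a (Suc k)) + a (Suc n)"
  proof -
    have "(\<Sum>i\<le>Suc n. real (Suc n choose i) * a i) + a (Suc n) = 0"
      using key[of "Suc n"] assms unfolding a_def by simp
    moreover have "(\<Sum>i\<le>Suc n. real (Suc n choose i) * a i)
        = (\<Sum>k<Suc n. real (Suc n choose Suc k) * a (Suc k))"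
      unfolding sum.atMost_Suc_shift by (simp add: a_def lessThan_Suc_atMost)
    ultimately show ?thesis by simp
  qed
  have e1: "real (n choose k) * c (Suc k) = real (Suc n choose Suc k) * a (Suc k) / real (Suc n)" for k
  proof -
    have "real (Suc n) * real (n choose k) = real (Suc n choose Suc k) * real (Suc k)"
      using Suc_times_binomial_eq[of n k] by (metis of_nat_mult)
    thus ?thesis unfolding a_def c_def by (simp add: field_simps del: of_nat_Suc binomial_Suc_Suc)
  qed
  have "T (Suc n) = (\<Sum>k<Suc n. real (n choose k) * c (Suc k))
       + (\<Sum>k<Suc n. (real (n choose Suc k) + 1) * c (Suc k))"
    unfolding T' by (simp add: sum.distrib[symmetric] algebra_simps)
  also have "(\<Sum>k<Suc n. (real (n choose Suc k) + 1) * c (Suc k)) = T n + c (Suc n)"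
    unfolding T' by simp
  also have "(\<Sum>k<Suc n. real (n choose k) * c (Suc k))
      = (\<Sum>k<Suc n. real (Suc n choose Suc k) * a (Suc k)) / real (Suc n)"
    unfolding e1 by (simp only: sum_divide_distrib)
  also have "c (Suc n) = a (Suc n) / real (Suc n)"
    unfolding a_def c_def by simp
  finally have "T (Suc n) = T n + ((\<Sum>k<Suc n. real (Suc n choose Suc k) * a (Suc k)) + a (Suc n)) / real (Suc n)"
    by (simp add: add_divide_distrib)
  hence "T (Suc n) = T n" using hk by simp
  thus ?thesis unfolding T_def c_def by (simp add: mult.assoc)
qed

theorem corollary2:
  fixes n :: nat
  assumes "n \<ge> 1"
  shows "(\<Sum>j=1..n. (real (n choose j) + 1) * (bernoulli j / real j) * (1 - 2 ^ j)) = 1"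
  using assms
proof (induction n rule: dec_induct)
  case base
  show ?case using key[of 1] by simp
next
  case (step m)
  thus ?case using step_lemma[of m] by simp
qed

end
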